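(* Let $G=(V,E)$ be a connected hypergraph with at least two vertices. Then: (a) there exists at least one construction sequence; (b) if $G$ is a hypertree, then every construction sequence $(A_1,\ldots,A_m)$ satisfies $\big|\big(\bigcup_{i=1}^{\ell-1}A_i\big)\cap A_\ell\big|=1$ for all $2\le\ell\le m$; (c) if $G$ is not a hypertree, then every construction sequence $(A_1,\ldots,A_m)$ satisfies $\big|\big(\bigcup_{i=1}^{\ell-1}A_i\big)\cap A_\ell\big|\ge2$ for at least one $\ell$.
   Context: A hypergraph is a pair $G=(V,E)$ with $V$ finite and $E$ a set of subsets of $V$, each of cardinality at least 2. A walk is a sequence $(v_0,e_1,v_1,\ldots,e_k,v_k)$ with $v_i\in V$, $e_i\in E$ and $v_{i-1},v_i\in e_i$; $G$ is connected if any two vertices are joined by a walk. A cycle is a walk with $v_0,\ldots,v_{k-1}$ distinct, $v_k=v_0$, $e_1,\ldots,e_k$ distinct and $k\ge2$. A hypertree is a connected hypergraph with no cycles. For a connected hypergraph with $|V|\ge2$, a construction sequence is an ordering $(A_1,\ldots,A_m)$ of all of $E$ such that $\big(\bigcup_{i=1}^{\ell-1}A_i\big)\cap A_\ell\neq\emptyset$ for $2\le\ell\le m$. *)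

theory Defs
  imports Main
begin

definition hypergraph :: "'a set \<Rightarrow> 'a set set \<Rightarrow> bool" where
  "hypergraph V E \<longleftrightarrow> finite V \<and> (\<forall>e\<in>E. e \<subseteq> V \<and> card e \<ge> 2)"

text \<open>A walk (v_0,e_1,v_1,...,e_k,v_k) is given by the vertex list vs = [v_0,...,v_k]
  and the edge list es = [e_1,...,e_k]; so length vs = length es + 1.\<close>
definition is_walk :: "'a set \<Rightarrow> 'a set set \<Rightarrow> 'a list \<Rightarrow> 'a set list \<Rightarrow> bool" where
  "is_walk V E vs es \<longleftrightarrow> length vs = Suc (length es) \<and> set vs \<subseteq> V \<and> set es \<subseteq> E \<and>
     (\<forall>i < length es. vs ! i \<in> es ! i \<and> vs ! Suc i \<in> es ! i)"

definition hg_connected :: "'a set \<Rightarrow> 'a set set \<Rightarrow> bool" where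
  "hg_connected V E \<longleftrightarrow> (\<forall>u\<in>V. \<forall>w\<in>V. \<exists>vs es. is_walk V E vs es \<and> hd vs = u \<and> last vs = w)"

definition is_cycle :: "'a set \<Rightarrow> 'a set set \<Rightarrow> 'a list \<Rightarrow> 'a set list \<Rightarrow> bool" where
  "is_cycle V E vs es \<longleftrightarrow> is_walk V E vs es \<and> length es \<ge> 2 \<and>
     distinct (butlast vs) \<and> last vs = hd vs \<and> distinct es"

definition hypertree :: "'a set \<Rightarrow> 'a set set \<Rightarrow> bool" where
  "hypertree V E \<longleftrightarrow> hg_connected V E \<and> \<not> (\<exists>vs es. is_cycle V E vs es)"

text \<open>Construction sequence (A_1,...,A_m) as a list As (0-indexed: As!0 = A_1):
  an ordering of all of E, and for 2 \<le> l \<le> m, (A_1 \<union> ... \<union> A_(l-1)) \<inter> A_l \<noteq> {}.\<close>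
definition construction_seq :: "'a set set \<Rightarrow> 'a set list \<Rightarrow> bool" where
  "construction_seq E As \<longleftrightarrow> distinct As \<and> set As = E \<and>
     (\<forall>l. 2 \<le> l \<and> l \<le> length As \<longrightarrow> (\<Union>i\<in>{1..<l}. As ! (i - 1)) \<inter> As ! (l - 1) \<noteq> {})"

end

theory Submission
  imports Defs
begin

inductive wk :: "'a set set \<Rightarrow> 'a list \<Rightarrow> 'a set list \<Rightarrow> bool" for F where
  wk0: "wk F [x] []"
| wkS: "e \<in> F \<Longrightarrow> x \<in> e \<Longrightarrow> y \<in> e \<Longrightarrow> wk F (y#vs) es \<Longrightarrow> wk F (x#y#vs) (e#es)"

lemma wk_len: "wk F vs es \<Longrightarrow> length vs = Suc (length es)"
  by (induction rule: wk.induct) auto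

lemma wk_idx: "wk F vs es \<Longrightarrow> set es \<subseteq> F \<and> (\<forall>i<length es. vs!i \<in> es!i \<and> vs!Suc i \<in> es!i)"
proof (induction rule: wk.induct)
  case (wk0 x) then show ?case by auto
next
  case (wkS e x y vs es)
  then show ?case by (auto simp: less_Suc_eq_0_disj)
qed

lemma wk_set: "wk F vs es \<Longrightarrow> set vs \<subseteq> \<Union>(set es) \<union> {hd vs}"
  by (induction rule: wk.induct) auto

lemma wk_mono: "wk F vs es \<Longrightarrow> F \<subseteq> G \<Longrightarrow> wk G vs es"
  by (induction rule: wk.induct) (auto intro: wk.intros)

lemma wk_app: "wk F vs es1 \<Longrightarrow> vs = a @ [u] \<Longrightarrow> wk F (u#b) es2 \<Longrightarrow> wk F (a@[u]@b) (es1@es2)"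
proof (induction arbitrary: a rule: wk.induct)
  case (wk0 x) then show ?case by (cases a) auto
next
  case (wkS e x y vs es)
  then obtain a' where a: "a = x # a'" "y#vs = a' @ [u]" by (cases a) auto
  then have "wk F (a'@[u]@b) (es@es2)" using wkS by blast
  moreover have "a'@[u]@b = y # (vs @ b)" using a(2) by (metis append_Cons append_assoc)
  ultimately have "wk F (y # vs @ b) (es@es2)" by metis
  then have "wk F (x # y # vs @ b) (e#es@es2)" using wkS by (auto intro: wk.intros)
  moreover have "a @ [u] @ b = x # y # vs @ b" using a by (metis append_Cons append_assoc)
  ultimately show ?case by (simp only:) simp
qed

lemma wk_split: "wk F vs (es1@es2) \<Longrightarrow> \<exists>a u b. vs = a@[u]@b \<and> length a = length es1 \<and> wk F (a@[u]) es1 \<and> wk F (u#b) es2"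
proof (induction es1 arbitrary: vs)
  case Nil
  then obtain u b where "vs = u # b" using wk_len[OF Nil] by (cases vs) auto
  then show ?case using Nil by (auto intro: wk.intros)
next
  case (Cons e es1)
  then obtain x y vs' where v: "vs = x#y#vs'" "e \<in> F" "x \<in> e" "y \<in> e" "wk F (y#vs') (es1@es2)"
    by (auto elim: wk.cases)
  from Cons.IH[OF v(5)] obtain a u b where ab: "y#vs' = a@[u]@b" "length a = length es1"
    "wk F (a@[u]) es1" "wk F (u#b) es2" by blast
  have "a @ [u] = y # tl (a@[u])" using ab(1) by (cases a) auto
  then have "wk F (x # a @ [u]) (e#es1)" using v ab(3) by (metis wk.wkS)
  then show ?case using ab v by (intro exI[of _ "x#a"] exI[of _ u] exI[of _ b]) auto
qed

lemma wk_hd_last: "wk F vs es \<Longrightarrow> vs \<noteq> []" using wk_len by fastforce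

lemma wk_split_vs: "wk F (a@[u]@b) es \<Longrightarrow> \<exists>es1 es2. es = es1@es2 \<and> length es1 = length a \<and> wk F (a@[u]) es1 \<and> wk F (u#b) es2"
proof -
  assume w: "wk F (a@[u]@b) es"
  have "length a \<le> length es" using wk_len[OF w] by simp
  have "es = take (length a) es @ drop (length a) es" by simp
  with w have "wk F (a@[u]@b) (take (length a) es @ drop (length a) es)" by simp
  from wk_split[OF this] obtain a' u' b' where ab: "a@[u]@b = a'@[u']@b'" "length a' = length (take (length a) es)"
    "wk F (a'@[u']) (take (length a) es)" "wk F (u'#b') (drop (length a) es)" by blast
  have "length a' = length a" using ab(2) \<open>length a \<le> length es\<close> by simp
  then have "a = a'" "u = u'" "b = b'" using ab(1) by (auto simp: append_eq_append_conv)
  moreover have "length (take (length a) es) = length a" using \<open>length a \<le> length es\<close> by simp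
  ultimately show ?thesis using ab(3,4) by (metis append_take_drop_id)
qed

lemma wk_path: "wk F vs es \<Longrightarrow> \<exists>vs' es'. wk F vs' es' \<and> hd vs' = hd vs \<and> last vs' = last vs \<and> distinct vs' \<and> distinct es'"
proof (induction "length es" arbitrary: vs es rule: less_induct)
  case less
  show ?case
  proof (cases "distinct vs \<and> distinct es")
    case True then show ?thesis using less.prems by blast
  next
    case False
    then consider "\<not> distinct vs" | "\<not> distinct es" by blast
    then show ?thesis
    proof cases
      case 1
      then obtain a u b c where vs: "vs = a@[u]@b@[u]@c" using not_distinct_decomp by blast
      have "wk F (a@[u]@(b@[u]@c)) es" using less.prems vs by simp
      from wk_split_vs[OF this] obtain es1 es2 where e1: "es = es1@es2" "wk F (a@[u]) es1" "wk F (u#b@[u]@c) es2"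
        by auto
      have "wk F ((u#b)@[u]@c) es2" using e1(3) by simp
      from wk_split_vs[OF this] obtain es3 es4 where e2: "es2 = es3@es4" "length es3 = Suc (length b)" "wk F (u#c) es4"
        by auto
      have w: "wk F (a@[u]@c) (es1@es4)" using wk_app[OF e1(2) refl e2(3)] .
      have "length (es1@es4) < length es" using e1(1) e2 by simp
      from less.hyps[OF this w] obtain vs' es' where r: "wk F vs' es'" "hd vs' = hd (a@[u]@c)"
         "last vs' = last (a@[u]@c)" "distinct vs'" "distinct es'" by blast
      have "hd (a@[u]@c) = hd vs" unfolding vs by (simp add: hd_append)
      moreover have "last (a@[u]@c) = last vs" unfolding vs by (simp add: last_append)
      ultimately show ?thesis using r by metis
    next
      case 2
      then obtain p e q r where es: "es = p@[e]@q@[e]@r" using not_distinct_decomp by blast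
      have "wk F vs (p@((e#q)@(e#r)))" using less.prems es by simp
      from wk_split[OF this] obtain a u b where s1: "vs = a@[u]@b" "wk F (a@[u]) p" "wk F (u#b) ((e#q)@(e#r))" by blast
      from wk_split[OF s1(3)] obtain a' u' b' where s2: "u#b = a'@[u']@b'" "wk F (a'@[u']) (e#q)" "wk F (u'#b') (e#r)" by blast
      from s2(2) obtain x0 y0 vs0 where "a'@[u'] = x0#y0#vs0" "x0 \<in> e" by (auto elim: wk.cases)
      then have ue: "u \<in> e" using s2(1) by (cases a') auto
      from s2(3) obtain y vs'' where b': "b' = y#vs''" "y \<in> e" "e \<in> F" "wk F (y#vs'') r" by (auto elim: wk.cases)
      have "wk F (u#y#vs'') (e#r)" using ue b' by (auto intro: wk.intros)
      from wk_app[OF s1(2) refl this] have w: "wk F (a@[u]@y#vs'') (p@e#r)" .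
      have "length (p@e#r) < length es" using es by simp
      from less.hyps[OF this w] obtain vs' es' where r: "wk F vs' es'" "hd vs' = hd (a@[u]@y#vs'')"
         "last vs' = last (a@[u]@y#vs'')" "distinct vs'" "distinct es'" by blast
      have "last (a@[u]@y#vs'') = last (u#b)" using s2(1) b' by (simp add: last_append)
      then have "last vs' = last vs" using r(3) s1(1) by (simp add: last_append)
      moreover have "hd vs' = hd vs" using r(2) s1(1) by (simp add: hd_append)
      ultimately show ?thesis using r by blast
    qed
  qed
qed


lemma UN_take: "n \<le> length As \<Longrightarrow> (\<Union>i\<in>{1..<Suc n}. As ! (i - 1)) = \<Union>(set (take n As))"
proof -
  assume n: "n \<le> length As"
  have "(\<lambda>i. As!(i-1)) ` {1..<Suc n} = set (take n As)"
  proof safe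
    fix i assume "i \<in> {1..<Suc n}"
    then have "i - 1 < length (take n As)" "take n As ! (i-1) = As!(i-1)" using n by auto
    then show "As!(i-1) \<in> set (take n As)" by (metis nth_mem)
  next
    fix x assume "x \<in> set (take n As)"
    then obtain j where j: "j < length (take n As)" "x = take n As ! j" by (auto simp: in_set_conv_nth)
    then have "x = As ! (Suc j - 1)" "Suc j \<in> {1..<Suc n}" by auto
    then show "x \<in> (\<lambda>i. As!(i-1)) ` {1..<Suc n}" by blast
  qed
  then show ?thesis by (metis (no_types) image_image)
qed

definition cprop :: "'a set list \<Rightarrow> bool" where
  "cprop As \<longleftrightarrow> (\<forall>n. 1 \<le> n \<and> n < length As \<longrightarrow> \<Union>(set (take n As)) \<inter> As!n \<noteq> {})"

lemma cs_iff: "construction_seq E As \<longleftrightarrow> distinct As \<and> set As = E \<and> cprop As"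
proof -
  have "(\<forall>l. 2 \<le> l \<and> l \<le> length As \<longrightarrow> (\<Union>i\<in>{1..<l}. As ! (i - 1)) \<inter> As ! (l - 1) \<noteq> {})
     \<longleftrightarrow> cprop As" (is "?L \<longleftrightarrow> ?R")
  proof
    assume L: ?L
    show ?R unfolding cprop_def
    proof safe
      fix n x assume "1 \<le> n" "n < length As" "\<Union>(set (take n As)) \<inter> As!n = {}"
      moreover have "(\<Union>i\<in>{1..<Suc n}. As ! (i - 1)) \<inter> As ! (Suc n - 1) \<noteq> {}"
        using L \<open>1 \<le> n\<close> \<open>n < length As\<close> by (metis Suc_le_eq Suc_le_mono one_add_one plus_1_eq_Suc)
      ultimately show False using UN_take[of n As] by simp
    qed
  next
    assume R: ?R
    show ?L
    proof safe
      fix l x assume l: "2 \<le> l" "l \<le> length As" "(\<Union>i\<in>{1..<l}. As ! (i - 1)) \<inter> As ! (l - 1) = {}"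
      then obtain n where "l = Suc n" "1 \<le> n" "n < length As" by (cases l) auto
      then show False using l R UN_take[of n As] unfolding cprop_def by auto
    qed
  qed
  then show ?thesis unfolding construction_seq_def by blast
qed

lemma wk_app': "wk F vs es1 \<Longrightarrow> wk F (last vs # b) es2 \<Longrightarrow> wk F (vs @ b) (es1@es2)"
  by (metis append_Cons append_Nil append_assoc append_butlast_last_id wk_app wk_hd_last)

lemma conn_prefix:
  assumes "cprop As" "1 \<le> n" "n \<le> length As"
  shows "x \<in> \<Union>(set (take n As)) \<Longrightarrow> y \<in> \<Union>(set (take n As)) \<Longrightarrow>
     \<exists>vs es. wk (set (take n As)) vs es \<and> hd vs = x \<and> last vs = y"
  using assms(2,3)
proof (induction n arbitrary: x y)
  case 0 then show ?case by simp
next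
  case (Suc n)
  show ?case
  proof (cases "n = 0")
    case True
    then obtain A As' where As: "As = A # As'" using Suc by (cases As) auto
    then have "x \<in> A" "y \<in> A" using Suc True by auto
    then have "wk (set (take (Suc n) As)) [x,y] [A]" using As True by (auto intro: wk.intros)
    then show ?thesis by force
  next
    case False
    let ?T = "set (take n As)"
    have tk: "take (Suc n) As = take n As @ [As!n]" using Suc by (simp add: take_Suc_conv_app_nth)
    have sub: "?T \<subseteq> set (take (Suc n) As)" using tk by auto
    have An: "As!n \<in> set (take (Suc n) As)" using tk by auto
    have "1 \<le> n" "n < length As" using False Suc.prems by auto
    then have "\<Union>?T \<inter> As!n \<noteq> {}" using assms(1) unfolding cprop_def by blast
    then obtain z where z: "z \<in> \<Union>?T" "z \<in> As!n" by blast
    have IH: "\<And>x y. x \<in> \<Union>?T \<Longrightarrow> y \<in> \<Union>?T \<Longrightarrow> \<exists>vs es. wk (set (take (Suc n) As)) vs es \<and> hd vs = x \<and> last vs = y"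
      using Suc.IH False Suc.prems wk_mono[OF _ sub] by (metis Suc_leD less_one not_le)
    have one: "\<And>x y. x \<in> As!n \<Longrightarrow> y \<in> As!n \<Longrightarrow> wk (set (take (Suc n) As)) [x,y] [As!n]"
      using An by (auto intro: wk.intros)
    have xs: "x \<in> \<Union>?T \<or> x \<in> As!n" "y \<in> \<Union>?T \<or> y \<in> As!n" using Suc.prems tk by auto
    show ?thesis
    proof (cases "x \<in> \<Union>?T")
      case xT: True
      show ?thesis
      proof (cases "y \<in> \<Union>?T")
        case True then show ?thesis using IH xT by blast
      next
        case False
        then have y: "y \<in> As!n" using xs by blast
        obtain vs es where w: "wk (set (take (Suc n) As)) vs es" "hd vs = x" "last vs = z" using IH xT z by blast
        have "wk (set (take (Suc n) As)) (vs@[y]) (es@[As!n])" using wk_app'[OF w(1)] one[OF z(2) y] w(3) by simp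
        moreover have "hd (vs@[y]) = x" using w wk_hd_last by fastforce
        ultimately show ?thesis by fastforce
      qed
    next
      case False
      then have x: "x \<in> As!n" using xs by blast
      show ?thesis
      proof (cases "y \<in> \<Union>?T")
        case True
        obtain vs es where w: "wk (set (take (Suc n) As)) vs es" "hd vs = z" "last vs = y" using IH True z by blast
        have vs: "vs = z # tl vs" using w wk_hd_last by (metis list.collapse)
        have "wk (set (take (Suc n) As)) (x#z#tl vs) (As!n#es)"
          by (rule wk.wkS[OF An x z(2)]) (use w(1) vs in simp)
        then have "wk (set (take (Suc n) As)) (x#vs) (As!n#es)" using vs by simp
        moreover have "last (x#vs) = y" using w(3) vs by (metis last_ConsR list.simps(3))
        ultimately show ?thesis by (metis list.sel(1))
      next
        case False
        then have "y \<in> As!n" using xs by blast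
        then have "wk (set (take (Suc n) As)) [x,y] [As!n]" using one x by blast
        then show ?thesis by (metis last_ConsL last_ConsR list.distinct(1) list.sel(1))
      qed
    qed
  qed
qed

lemma notin_take: "distinct As \<Longrightarrow> n < length As \<Longrightarrow> As!n \<notin> set (take n As)"
  by (auto simp: in_set_conv_nth nth_eq_iff_index_eq)


lemma partB:
  assumes hg: "hypergraph V E" and ht: "hypertree V E" and cs: "construction_seq E As"
    and n: "1 \<le> n" "n < length As"
  shows "card (\<Union>(set (take n As)) \<inter> As!n) = 1"
proof -
  let ?I = "\<Union>(set (take n As)) \<inter> As!n"
  have dist: "distinct As" and setE: "set As = E" and cp: "cprop As" using cs cs_iff by blast+
  have AnE: "As!n \<in> E" using setE n by auto
  have fin: "finite ?I" using hg AnE unfolding hypergraph_def by (meson finite_Int finite_subset)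
  have ne: "?I \<noteq> {}" using cp n unfolding cprop_def by blast
  have alleq: "\<forall>a\<in>?I. \<forall>b\<in>?I. a = b"
  proof (rule ccontr)
    assume "\<not> ?thesis"
    then obtain a b where ab: "a \<in> ?I" "b \<in> ?I" "a \<noteq> b" by blast
    obtain vs0 es0 where w0: "wk (set (take n As)) vs0 es0" "hd vs0 = a" "last vs0 = b"
      using conn_prefix[OF cp n(1)] n ab by (meson IntD1 less_imp_le_nat)
    obtain vs es where w: "wk (set (take n As)) vs es" "hd vs = a" "last vs = b" "distinct vs" "distinct es"
      using wk_path[OF w0(1)] w0 by metis
    have lenv: "length vs = Suc (length es)" using wk_len[OF w(1)] .
    have esne: "es \<noteq> []"
    proof
      assume "es = []"
      then obtain v where "vs = [v]" using lenv by (cases vs) auto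
      then show False using w ab by simp
    qed
    have idx: "set es \<subseteq> set (take n As)" "\<forall>i<length es. vs!i \<in> es!i \<and> vs!Suc i \<in> es!i"
      using wk_idx[OF w(1)] by auto
    have esE: "set es \<subseteq> E" using idx(1) setE by (meson order_trans set_take_subset)
    have edgesV: "\<forall>e\<in>E. e \<subseteq> V" using hg unfolding hypergraph_def by blast
    have aV: "a \<in> V" using ab AnE edgesV by blast
    have vsV: "set vs \<subseteq> V" using wk_set[OF w(1)] esE edgesV w(2) aV by blast
    have notin: "As!n \<notin> set es" using notin_take[OF dist n(2)] idx(1) by blast
    have "is_cycle V E (vs@[a]) (es@[As!n])"
      unfolding is_cycle_def is_walk_def
    proof (intro conjI)
      show "length (vs @ [a]) = Suc (length (es @ [As ! n]))" using lenv by simp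
      show "set (vs @ [a]) \<subseteq> V" using vsV aV by simp
      show "set (es @ [As ! n]) \<subseteq> E" using esE AnE by simp
      show "\<forall>i<length (es @ [As ! n]). (vs @ [a]) ! i \<in> (es @ [As ! n]) ! i \<and> (vs @ [a]) ! Suc i \<in> (es @ [As ! n]) ! i"
      proof (intro allI impI)
      fix i assume i: "i < length (es @ [As ! n])"
      show "(vs @ [a]) ! i \<in> (es @ [As ! n]) ! i \<and> (vs @ [a]) ! Suc i \<in> (es @ [As ! n]) ! i"
      proof (cases "i < length es")
        case True
        then show ?thesis using idx(2) lenv by (auto simp: nth_append)
      next
        case False
        then have ii: "i = length es" using i by simp
        have "vs ! length es = b" using w(3) lenv by (metis diff_Suc_1 last_conv_nth list.size(3) nat.distinct(1))
        then show ?thesis using ii ab lenv by (auto simp: nth_append)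
      qed
      qed
    next
      show "2 \<le> length (es @ [As ! n])" using esne by (cases es) auto
      show "distinct (butlast (vs @ [a]))" using w(4) by simp
      show "last (vs @ [a]) = hd (vs @ [a])" using w(2) lenv by (cases vs) auto
      show "distinct (es @ [As ! n])" using w(5) notin by simp
    qed
    then show False using ht unfolding hypertree_def by blast
  qed
  have "card ?I \<le> 1" using card_le_Suc0_iff_eq[OF fin] alleq by simp
  moreover have "card ?I > 0" using fin ne by (simp add: card_gt_0_iff)
  ultimately show ?thesis by linarith
qed

lemma partC:
  assumes hg: "hypergraph V E" and cs: "construction_seq E As" and cyc: "is_cycle V E vs es"
  shows "\<exists>n. 1 \<le> n \<and> n < length As \<and> card (\<Union>(set (take n As)) \<inter> As!n) \<ge> 2"
proof -
  have dist: "distinct As" and setE: "set As = E" using cs cs_iff by blast+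
  let ?k = "length es"
  have k2: "?k \<ge> 2" and lenv: "length vs = Suc ?k" and esE: "set es \<subseteq> E"
    and wc: "\<forall>i<?k. vs!i \<in> es!i \<and> vs!Suc i \<in> es!i"
    and dbl: "distinct (butlast vs)" and lh: "last vs = hd vs" and des: "distinct es"
    using cyc unfolding is_cycle_def is_walk_def by auto
  define I where "I = {m. m < length As \<and> As!m \<in> set es}"
  have finI: "finite I" unfolding I_def by simp
  have e0: "es!0 \<in> set es" by (intro nth_mem) (use k2 in linarith)
  then have "es!0 \<in> set As" using esE setE by blast
  then obtain m0 where "m0 < length As" "As!m0 = es!0" by (auto simp: in_set_conv_nth)
  then have "m0 \<in> I" using e0 unfolding I_def by auto
  then have neI: "I \<noteq> {}" by blast
  define n0 where "n0 = Max I"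
  have n0I: "n0 \<in> I" using finI neI n0_def by simp
  then have n0l: "n0 < length As" and "As!n0 \<in> set es" unfolding I_def by auto
  then obtain j where j: "j < ?k" "es!j = As!n0" by (auto simp: in_set_conv_nth)
  have other: "\<And>j'. j' < ?k \<Longrightarrow> j' \<noteq> j \<Longrightarrow> \<exists>m<n0. es!j' = As!m"
  proof -
    fix j' assume j': "j' < ?k" "j' \<noteq> j"
    have "es!j' \<in> set As" using esE setE j' by auto
    then obtain m where m: "m < length As" "As!m = es!j'" by (auto simp: in_set_conv_nth)
    then have "m \<in> I" using j' unfolding I_def by auto
    then have "m \<le> n0" using finI n0_def by simp
    moreover have "m \<noteq> n0" using m j j' des by (metis nth_eq_iff_index_eq)
    ultimately show "\<exists>m<n0. es!j' = As!m" using m by (metis le_neq_implies_less)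
  qed
  have inpre: "\<And>j'. j' < ?k \<Longrightarrow> j' \<noteq> j \<Longrightarrow> es!j' \<subseteq> \<Union>(set (take n0 As))"
  proof -
    fix j' assume "j' < ?k" "j' \<noteq> j"
    then obtain m where "m < n0" "es!j' = As!m" using other by blast
    then have "take n0 As ! m = As!m" "m < length (take n0 As)" using n0l by auto
    then have "es!j' \<in> set (take n0 As)" using \<open>es!j' = As!m\<close> by (metis nth_mem)
    then show "es!j' \<subseteq> \<Union>(set (take n0 As))" by blast
  qed
  have n0pos: "1 \<le> n0"
  proof -
    define j' where "j' = (if j = 0 then 1 else (0::nat))"
    have "j' < ?k" "j' \<noteq> j" using k2 unfolding j'_def by auto
    then show ?thesis using other by fastforce
  qed
  have v0: "vs!0 = vs!?k" using lh lenv by (metis diff_Suc_1 hd_conv_nth last_conv_nth list.size(3) nat.distinct(1))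
  have bl: "\<And>i. i < ?k \<Longrightarrow> butlast vs ! i = vs ! i" using lenv by (simp add: nth_butlast)
  have lbl: "length (butlast vs) = ?k" using lenv by simp
  let ?p = "vs!j" and ?q = "vs!Suc j"
  have pq: "?p \<in> As!n0" "?q \<in> As!n0" using wc j by auto
  have p: "?p \<in> \<Union>(set (take n0 As))"
  proof (cases "j = 0")
    case True
    have kk: "?k - 1 < ?k" "Suc (?k - 1) = ?k" using k2 by auto
    then have "vs ! ?k \<in> es!(?k - 1)" using wc by metis
    then have "?p \<in> es!(?k - 1)" using v0 True by simp
    moreover have "?k - 1 \<noteq> j" using True k2 by simp
    ultimately show ?thesis using inpre[of "?k - 1"] kk(1) by blast
  next
    case False
    then have "?p \<in> es!(j-1)" using wc j by (metis Suc_pred' bot_nat_0.not_eq_extremum less_imp_diff_less)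
    moreover have "j - 1 \<noteq> j" "j - 1 < ?k" using False j by auto
    ultimately show ?thesis using inpre[of "j-1"] by blast
  qed
  have q: "?q \<in> \<Union>(set (take n0 As))"
  proof (cases "Suc j < ?k")
    case True
    then have "?q \<in> es!(Suc j)" using wc by blast
    then show ?thesis using inpre[of "Suc j"] True by (meson Suc_n_not_n subsetD)
  next
    case False
    then have jk: "Suc j = ?k" using j by simp
    have "0 < ?k" using k2 by linarith
    then have "vs!0 \<in> es!0" using wc by blast
    then have "?q \<in> es!0" using v0 jk by simp
    moreover have "0 \<noteq> j" using jk k2 by simp
    ultimately show ?thesis using inpre[of 0] \<open>0 < ?k\<close> by blast
  qed
  have pnq: "?p \<noteq> ?q"
  proof (cases "Suc j < ?k")
    case True
    then show ?thesis using dbl bl[of j] bl[of "Suc j"] lbl j by (metis Suc_n_not_n nth_eq_iff_index_eq)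
  next
    case False
    then have jk: "Suc j = ?k" using j by simp
    then have "j \<noteq> 0" using k2 by simp
    have "0 < ?k" using k2 by linarith
    then have "butlast vs ! j \<noteq> butlast vs ! 0" using dbl lbl j \<open>j \<noteq> 0\<close> by (simp add: nth_eq_iff_index_eq)
    then show ?thesis using bl[of j] bl[of 0] j \<open>0 < ?k\<close> jk v0 by simp
  qed
  let ?I = "\<Union>(set (take n0 As)) \<inter> As!n0"
  have "As!n0 \<in> E" using setE n0l by auto
  then have fin: "finite ?I" using hg unfolding hypergraph_def by (meson finite_Int finite_subset)
  have "{?p, ?q} \<subseteq> ?I" using p q pq by blast
  then have "card {?p, ?q} \<le> card ?I" using fin by (rule card_mono[rotated])
  then have "card ?I \<ge> 2" using pnq by simp
  then show ?thesis using n0pos n0l by blast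
qed


lemma ext_step:
  assumes hg: "hypergraph V E" and con: "hg_connected V E"
    and sub: "set As \<subseteq> E" and ne: "As \<noteq> []" and neq: "set As \<noteq> E"
  shows "\<exists>e\<in>E - set As. e \<inter> \<Union>(set As) \<noteq> {}"
proof -
  have edges: "\<forall>e\<in>E. e \<subseteq> V \<and> card e \<ge> 2" and finV: "finite V" using hg unfolding hypergraph_def by auto
  have nonempty: "\<And>e. e \<in> E \<Longrightarrow> e \<noteq> {}" using edges by fastforce
  obtain f where f: "f \<in> E" "f \<notin> set As" using sub neq by blast
  obtain x where x: "x \<in> f" using nonempty[OF f(1)] by blast
  have A0: "As!0 \<in> set As" using ne by simp
  obtain y where y: "y \<in> As!0" using nonempty A0 sub by blast
  let ?U = "\<Union>(set As)"
  have yU: "y \<in> ?U" using y A0 by blast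
  have xV: "x \<in> V" "y \<in> V" using x y f A0 sub edges by blast+
  obtain vs es where w: "is_walk V E vs es" "hd vs = y" "last vs = x"
    using con xV unfolding hg_connected_def by blast
  have lenv: "length vs = Suc (length es)" and esE: "set es \<subseteq> E"
    and wc: "\<forall>i<length es. vs!i \<in> es!i \<and> vs!Suc i \<in> es!i" using w(1) unfolding is_walk_def by auto
  have claim: "\<And>i. i \<le> length es \<Longrightarrow> vs!i \<in> ?U \<or> (\<exists>i'<i. es!i' \<notin> set As \<and> vs!i' \<in> ?U)"
  proof -
    fix i show "i \<le> length es \<Longrightarrow> vs!i \<in> ?U \<or> (\<exists>i'<i. es!i' \<notin> set As \<and> vs!i' \<in> ?U)"
    proof (induction i)
      case 0
      have "vs!0 = y" using w(2) lenv by (metis hd_conv_nth list.size(3) nat.distinct(1))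
      then show ?case using yU by simp
    next
      case (Suc i)
      then have i: "i < length es" by simp
      from Suc.IH i consider "vs!i \<in> ?U" | "\<exists>i'<i. es!i' \<notin> set As \<and> vs!i' \<in> ?U" by fastforce
      then show ?case
      proof cases
        case 1
        show ?thesis
        proof (cases "es!i \<in> set As")
          case True
          then have "vs!Suc i \<in> ?U" using wc i by blast
          then show ?thesis by blast
        next
          case False
          then show ?thesis using 1 by blast
        qed
      next
        case 2 then show ?thesis using less_SucI by blast
      qed
    qed
  qed
  have "vs!length es = x" using w(3) lenv by (metis diff_Suc_1 last_conv_nth list.size(3) nat.distinct(1))
  then consider "x \<in> ?U" | "\<exists>i'<length es. es!i' \<notin> set As \<and> vs!i' \<in> ?U" using claim[of "length es"] by auto
  then show ?thesis
  proof cases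
    case 1 then show ?thesis using f x by blast
  next
    case 2
    then obtain i where i: "i < length es" "es!i \<notin> set As" "vs!i \<in> ?U" by blast
    have "es!i \<in> E" using esE i(1) by (meson nth_mem subsetD)
    moreover have "vs!i \<in> es!i" using wc i(1) by blast
    ultimately show ?thesis using i by blast
  qed
qed

lemma cprop_snoc: "cprop As \<Longrightarrow> As \<noteq> [] \<Longrightarrow> e \<inter> \<Union>(set As) \<noteq> {} \<Longrightarrow> cprop (As @ [e])"
  unfolding cprop_def
proof (intro allI impI)
  fix n assume cp: "\<forall>n. 1 \<le> n \<and> n < length As \<longrightarrow> \<Union> (set (take n As)) \<inter> As ! n \<noteq> {}"
    and e: "e \<inter> \<Union>(set As) \<noteq> {}" and n: "1 \<le> n \<and> n < length (As @ [e])"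
  show "\<Union> (set (take n (As @ [e]))) \<inter> (As @ [e]) ! n \<noteq> {}"
  proof (cases "n < length As")
    case True
    then show ?thesis using cp n by (simp add: nth_append)
  next
    case False
    then have "n = length As" using n by simp
    then show ?thesis using e by auto
  qed
qed

lemma partA:
  assumes hg: "hypergraph V E" and con: "hg_connected V E" and c2: "card V \<ge> 2"
  shows "\<exists>As. construction_seq E As"
proof -
  have finV: "finite V" using hg unfolding hypergraph_def by auto
  have finE: "finite E" using hg unfolding hypergraph_def
    by (meson Pow_iff finite_Pow_iff finite_subset subsetI)
  have "\<not> card V \<le> Suc 0" using c2 by simp
  then obtain u w where uw: "u \<in> V" "w \<in> V" "u \<noteq> w" using card_le_Suc0_iff_eq[OF finV] by blast
  obtain vs es where wk: "is_walk V E vs es" "hd vs = u" "last vs = w" using con uw unfolding hg_connected_def by blast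
  have "es \<noteq> []"
  proof
    assume "es = []"
    then obtain v where "vs = [v]" using wk(1) unfolding is_walk_def by (cases vs) auto
    then show False using wk uw by simp
  qed
  then have "es!0 \<in> E" using wk(1) unfolding is_walk_def by (meson length_greater_0_conv nth_mem subsetD)
  then obtain e0 where e0: "e0 \<in> E" by blast
  have gen: "\<And>As. distinct As \<Longrightarrow> set As \<subseteq> E \<Longrightarrow> cprop As \<Longrightarrow> As \<noteq> [] \<Longrightarrow> \<exists>Bs. construction_seq E Bs"
  proof -
    fix As :: "'a set list"
    show "distinct As \<Longrightarrow> set As \<subseteq> E \<Longrightarrow> cprop As \<Longrightarrow> As \<noteq> [] \<Longrightarrow> \<exists>Bs. construction_seq E Bs"
    proof (induction "card E - length As" arbitrary: As rule: less_induct)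
      case less
      show ?case
      proof (cases "set As = E")
        case True then show ?thesis using less.prems cs_iff by blast
      next
        case False
        then obtain e where e: "e \<in> E - set As" "e \<inter> \<Union>(set As) \<noteq> {}"
          using ext_step[OF hg con less.prems(2) less.prems(4)] by blast
        have "card (set As) < card E" using less.prems(2) False finE by (meson psubsetI psubset_card_mono)
        then have "length As < card E" using less.prems(1) distinct_card by metis
        then have "card E - length (As@[e]) < card E - length As" by simp
        moreover have "distinct (As@[e])" "set (As@[e]) \<subseteq> E" "cprop (As@[e])" "As@[e] \<noteq> []"
          using less.prems e cprop_snoc[of As e] by auto
        ultimately show ?thesis using less.hyps by blast
      qed
    qed
  qed
  have "cprop [e0]" unfolding cprop_def by simp
  then show ?thesis using gen[of "[e0]"] e0 by simp
qed

theorem proposition2p2: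
  fixes V :: "'a set" and E :: "'a set set"
  assumes "hypergraph V E" and "hg_connected V E" and "card V \<ge> 2"
  shows "(\<exists>As. construction_seq E As)
    \<and> (hypertree V E \<longrightarrow> (\<forall>As. construction_seq E As \<longrightarrow>
          (\<forall>l. 2 \<le> l \<and> l \<le> length As \<longrightarrow>
             card ((\<Union>i\<in>{1..<l}. As ! (i - 1)) \<inter> As ! (l - 1)) = 1)))
    \<and> (\<not> hypertree V E \<longrightarrow> (\<forall>As. construction_seq E As \<longrightarrow>
          (\<exists>l. 2 \<le> l \<and> l \<le> length As \<and>
             card ((\<Union>i\<in>{1..<l}. As ! (i - 1)) \<inter> As ! (l - 1)) \<ge> 2)))"
proof (intro conjI impI allI)
  show "\<exists>As. construction_seq E As" using partA assms by blast
next
  fix As l assume ht: "hypertree V E" and cs: "construction_seq E As" and l: "2 \<le> l \<and> l \<le> length As"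
  then obtain n where n: "l = Suc n" "1 \<le> n" "n < length As" by (cases l) auto
  have "card (\<Union>(set (take n As)) \<inter> As!n) = 1" using partB[OF assms(1) ht cs n(2,3)] .
  then show "card ((\<Union>i\<in>{1..<l}. As ! (i - 1)) \<inter> As ! (l - 1)) = 1"
    using UN_take[of n As] n by simp
next
  fix As assume nht: "\<not> hypertree V E" and cs: "construction_seq E As"
  then obtain vs es where "is_cycle V E vs es" using assms(2) unfolding hypertree_def by blast
  from partC[OF assms(1) cs this] obtain n where n: "1 \<le> n" "n < length As"
    "card (\<Union>(set (take n As)) \<inter> As!n) \<ge> 2" by blast
  then have "2 \<le> Suc n \<and> Suc n \<le> length As \<and> card ((\<Union>i\<in>{1..<Suc n}. As ! (i - 1)) \<inter> As ! (Suc n - 1)) \<ge> 2"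
    using UN_take[of n As] by simp
  then show "\<exists>l. 2 \<le> l \<and> l \<le> length As \<and> card ((\<Union>i\<in>{1..<l}. As ! (i - 1)) \<inter> As ! (l - 1)) \<ge> 2" by blast
qed

end
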